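(* Let $\mathbb{F}$ be a field of characteristic different from $2$, let $n\geq3$, and let $\mathcal{A}$ be a division $*$-algebra which is one of: $\mathbb{F}$, a binarion algebra $\mathcal{B}(\mathbb{F})$, or a quaternion algebra $\mathcal{Q}(\mathbb{F})$. Let $H_n(\mathcal{A})$ be the Jordan algebra of self-adjoint $n\times n$ matrices over $\mathcal{A}$. Then every 2-local 1-automorphism on $H_n(\mathcal{A})$ is an automorphism.
   Context: $\mathbb{F}$ carries the trivial involution. $\mathcal{B}(\mathbb{F})$ is the associative unital algebra with basis $\mathbf{1},i$, $i^2=\lambda\mathbf{1}$ ($\lambda\neq0$), involution $\overline{\alpha_0+\alpha_1i}=\alpha_0-\alpha_1i$. $\mathcal{Q}(\mathbb{F})$ is the associative unital algebra with basis $\mathbf{1},i,j,k$, $i^2=\lambda\mathbf{1}$, $j^2=\mu\mathbf{1}$, $ij=-ji=k$ ($\lambda,\mu\neq0$), involution negating the $i,j,k$ coordinates. $M_n(\mathcal{A})$ has involution $(a_{i,j})^*=(\overline{a_{j,i}})$, $H_n(\mathcal{A})=\{x:x^*=x\}$ with Jordan product $a\circ b=\frac12(ab+ba)$. A symmetry is $s\in H_n(\mathcal{A})$ with $s\circ s=1$ (identity matrix), and $U_s(x)=2s\circ(s\circ x)-x$. A 2-local 1-automorphism is a map $\Delta:H_n(\mathcal{A})\to H_n(\mathcal{A})$ (not assumed linear) such that for every $x,y$ there is a symmetry $s$ with $\Delta(x)=U_s(x)$, $\Delta(y)=U_s(y)$. *)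

theory Defs
  imports Main "HOL-Library.Product_Plus"
begin

text \<open>Generalized quaternion algebra over a field 'f with parameters lam (i^2) and mu (j^2).
  An element a0 + a1 i + a2 j + a3 k is represented by the tuple (a0, a1, a2, a3).
  Addition/zero/negation are componentwise (Product_Plus).
  The algebras F, B(F), Q(F) are realised as the subalgebras
  {(a,0,0,0)}, {(a,b,0,0)}, and everything, with the restricted multiplication
  and involution.\<close>

type_synonym 'f quat = "'f \<times> 'f \<times> 'f \<times> 'f"

definition qmul :: "'f::field \<Rightarrow> 'f \<Rightarrow> 'f quat \<Rightarrow> 'f quat \<Rightarrow> 'f quat" where
  "qmul lam mu x y = (case x of (a0, a1, a2, a3) \<Rightarrow> case y of (b0, b1, b2, b3) \<Rightarrow>
     (a0*b0 + lam*a1*b1 + mu*a2*b2 - lam*mu*a3*b3,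
      a0*b1 + a1*b0 - mu*a2*b3 + mu*a3*b2,
      a0*b2 + a2*b0 + lam*a1*b3 - lam*a3*b1,
      a0*b3 + a3*b0 + a1*b2 - a2*b1))"

definition qone :: "'f::field quat" where
  "qone = (1, 0, 0, 0)"

definition qscale :: "'f::field \<Rightarrow> 'f quat \<Rightarrow> 'f quat" where
  "qscale c x = (case x of (a0, a1, a2, a3) \<Rightarrow> (c*a0, c*a1, c*a2, c*a3))"

definition qconj :: "'f::field quat \<Rightarrow> 'f quat" where
  "qconj x = (case x of (a0, a1, a2, a3) \<Rightarrow> (a0, -a1, -a2, -a3))"

definition algF :: "'f::field quat set" where
  "algF = {(a, 0, 0, 0) | a. True}"

definition algB :: "'f::field quat set" where
  "algB = {(a, b, 0, 0) | a b. True}"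

definition algQ :: "'f::field quat set" where
  "algQ = UNIV"

definition is_division :: "'f::field \<Rightarrow> 'f \<Rightarrow> 'f quat set \<Rightarrow> bool" where
  "is_division lam mu A \<longleftrightarrow>
     (\<forall>a\<in>A. a \<noteq> 0 \<longrightarrow> (\<exists>b\<in>A. qmul lam mu a b = qone \<and> qmul lam mu b a = qone))"

text \<open>n x n matrices over A, represented as functions nat => nat => quat,
  with entries zero outside {0..<n}.\<close>
type_synonym 'f qmat = "nat \<Rightarrow> nat \<Rightarrow> 'f quat"

definition mmul :: "'f::field \<Rightarrow> 'f \<Rightarrow> nat \<Rightarrow> 'f qmat \<Rightarrow> 'f qmat \<Rightarrow> 'f qmat" where
  "mmul lam mu n x y = (\<lambda>i j. if i < n \<and> j < n then (\<Sum>k<n. qmul lam mu (x i k) (y k j)) else 0)"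

definition madd :: "'f::field qmat \<Rightarrow> 'f qmat \<Rightarrow> 'f qmat" where
  "madd x y = (\<lambda>i j. x i j + y i j)"

definition msub :: "'f::field qmat \<Rightarrow> 'f qmat \<Rightarrow> 'f qmat" where
  "msub x y = (\<lambda>i j. x i j - y i j)"

definition mscale :: "'f::field \<Rightarrow> 'f qmat \<Rightarrow> 'f qmat" where
  "mscale c x = (\<lambda>i j. qscale c (x i j))"

definition mid :: "nat \<Rightarrow> 'f::field qmat" where
  "mid n = (\<lambda>i j. if i = j \<and> i < n then qone else 0)"

definition Hmat :: "nat \<Rightarrow> 'f::field quat set \<Rightarrow> 'f qmat set" where
  "Hmat n A = {x. (\<forall>i j. (n \<le> i \<or> n \<le> j) \<longrightarrow> x i j = 0)
                \<and> (\<forall>i<n. \<forall>j<n. x i j \<in> A)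
                \<and> (\<forall>i j. x i j = qconj (x j i))}"

definition jprod :: "'f::field \<Rightarrow> 'f \<Rightarrow> nat \<Rightarrow> 'f qmat \<Rightarrow> 'f qmat \<Rightarrow> 'f qmat" where
  "jprod lam mu n x y = mscale (1/2) (madd (mmul lam mu n x y) (mmul lam mu n y x))"

definition is_symmetry :: "'f::field \<Rightarrow> 'f \<Rightarrow> nat \<Rightarrow> 'f quat set \<Rightarrow> 'f qmat \<Rightarrow> bool" where
  "is_symmetry lam mu n A s \<longleftrightarrow> s \<in> Hmat n A \<and> jprod lam mu n s s = mid n"

definition Umap :: "'f::field \<Rightarrow> 'f \<Rightarrow> nat \<Rightarrow> 'f qmat \<Rightarrow> 'f qmat \<Rightarrow> 'f qmat" where
  "Umap lam mu n s x = msub (mscale 2 (jprod lam mu n s (jprod lam mu n s x))) x"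

definition two_local_1_aut ::
  "'f::field \<Rightarrow> 'f \<Rightarrow> nat \<Rightarrow> 'f quat set \<Rightarrow> ('f qmat \<Rightarrow> 'f qmat) \<Rightarrow> bool" where
  "two_local_1_aut lam mu n A D \<longleftrightarrow>
     (\<forall>x\<in>Hmat n A. D x \<in> Hmat n A) \<and>
     (\<forall>x\<in>Hmat n A. \<forall>y\<in>Hmat n A. \<exists>s. is_symmetry lam mu n A s \<and>
         D x = Umap lam mu n s x \<and> D y = Umap lam mu n s y)"

definition jordan_automorphism ::
  "'f::field \<Rightarrow> 'f \<Rightarrow> nat \<Rightarrow> 'f quat set \<Rightarrow> ('f qmat \<Rightarrow> 'f qmat) \<Rightarrow> bool" where
  "jordan_automorphism lam mu n A D \<longleftrightarrow>
     bij_betw D (Hmat n A) (Hmat n A) \<and>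
     (\<forall>x\<in>Hmat n A. \<forall>y\<in>Hmat n A. D (madd x y) = madd (D x) (D y)) \<and>
     (\<forall>c. \<forall>x\<in>Hmat n A. D (mscale c x) = mscale c (D x)) \<and>
     (\<forall>x\<in>Hmat n A. \<forall>y\<in>Hmat n A. D (jprod lam mu n x y) = jprod lam mu n (D x) (D y))"

end

theory Submission
  imports Defs
begin


lemma zero_quat: "(0::'f::field quat) = (0,0,0,0)" by (simp add: zero_prod_def)

lemma q_assoc: "qmul l m (qmul l m x y) z = qmul l m x (qmul l m y z)"
  by (cases x rule: prod_cases4; cases y rule: prod_cases4; cases z rule: prod_cases4)
     (simp add: qmul_def algebra_simps)
lemma q_add_left: "qmul l m (x + y) z = qmul l m x z + qmul l m y z"
  by (cases x rule: prod_cases4; cases y rule: prod_cases4; cases z rule: prod_cases4)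
     (simp add: qmul_def algebra_simps)
lemma q_add_right: "qmul l m z (x + y) = qmul l m z x + qmul l m z y"
  by (cases x rule: prod_cases4; cases y rule: prod_cases4; cases z rule: prod_cases4)
     (simp add: qmul_def algebra_simps)
lemma q_zero_left[simp]: "qmul l m 0 z = 0"
  by (cases z rule: prod_cases4) (simp add: qmul_def zero_quat)
lemma q_zero_right[simp]: "qmul l m z 0 = 0"
  by (cases z rule: prod_cases4) (simp add: qmul_def zero_quat)
lemma q_scale_left: "qmul l m (qscale c x) y = qscale c (qmul l m x y)"
  by (cases x rule: prod_cases4; cases y rule: prod_cases4)
     (simp add: qmul_def qscale_def algebra_simps)
lemma q_scale_right: "qmul l m y (qscale c x) = qscale c (qmul l m y x)"
  by (cases x rule: prod_cases4; cases y rule: prod_cases4)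
     (simp add: qmul_def qscale_def algebra_simps)
lemma q_one_left[simp]: "qmul l m qone x = x"
  by (cases x rule: prod_cases4) (simp add: qmul_def qone_def)
lemma q_one_right[simp]: "qmul l m x qone = x"
  by (cases x rule: prod_cases4) (simp add: qmul_def qone_def)
lemma fst_qmul_comm: "fst (qmul l m p q) = fst (qmul l m q p)"
  by (cases p rule: prod_cases4; cases q rule: prod_cases4) (simp add: qmul_def algebra_simps)
lemma fst_qmul_conj: "fst (qmul l m (qconj p) (qconj q)) = fst (qmul l m p q)"
  by (cases p rule: prod_cases4; cases q rule: prod_cases4) (simp add: qmul_def qconj_def algebra_simps)
lemma qconj_qmul: "qconj (qmul l m p q) = qmul l m (qconj q) (qconj p)"
  by (cases p rule: prod_cases4; cases q rule: prod_cases4) (simp add: qmul_def qconj_def algebra_simps)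
lemma qconj_add: "qconj (p + q) = qconj p + qconj q"
  by (cases p rule: prod_cases4; cases q rule: prod_cases4) (simp add: qconj_def)
lemma qconj_diff: "qconj (p - q) = qconj p - qconj q"
  by (cases p rule: prod_cases4; cases q rule: prod_cases4) (simp add: qconj_def)
lemma qconj_qconj[simp]: "qconj (qconj p) = p"
  by (cases p rule: prod_cases4) (simp add: qconj_def)
lemma qconj_zero[simp]: "qconj 0 = 0"
  by (simp add: qconj_def zero_quat)
lemma qconj_one[simp]: "qconj qone = qone"
  by (simp add: qconj_def qone_def)
lemma qconj_scale: "qconj (qscale c p) = qscale c (qconj p)"
  by (cases p rule: prod_cases4) (simp add: qconj_def qscale_def)
lemma qscale_add: "qscale c (p + q) = qscale c p + qscale c q"
  by (cases p rule: prod_cases4; cases q rule: prod_cases4) (simp add: qscale_def algebra_simps)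
lemma qscale_diff: "qscale c (p - q) = qscale c p - qscale c q"
  by (cases p rule: prod_cases4; cases q rule: prod_cases4) (simp add: qscale_def algebra_simps)
lemma qscale_zero[simp]: "qscale c 0 = 0"
  by (simp add: qscale_def zero_quat)
lemma qscale_scale: "qscale c (qscale d p) = qscale (c*d) p"
  by (cases p rule: prod_cases4) (simp add: qscale_def)
lemma qscale_one[simp]: "qscale 1 p = p"
  by (cases p rule: prod_cases4) (simp add: qscale_def)
lemma qscale_addc: "qscale (c+d) p = qscale c p + qscale d p"
  by (cases p rule: prod_cases4) (simp add: qscale_def algebra_simps)
lemma fst_qscale: "fst (qscale c p) = c * fst p"
  by (cases p rule: prod_cases4) (simp add: qscale_def)
lemma q_sum_left: "qmul l m (sum f S) z = (\<Sum>k\<in>S. qmul l m (f k) z)"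
  using sum_comp_morphism[of "\<lambda>x. qmul l m x z" f S] by (simp add: q_add_left o_def)
lemma q_sum_right: "qmul l m z (sum f S) = (\<Sum>k\<in>S. qmul l m z (f k))"
  using sum_comp_morphism[of "\<lambda>x. qmul l m z x" f S] by (simp add: q_add_right o_def)
lemma qconj_sum: "qconj (sum f S) = (\<Sum>k\<in>S. qconj (f k))"
  using sum_comp_morphism[of qconj f S] by (simp add: qconj_add o_def)
lemma qscale_sum: "qscale c (sum f S) = (\<Sum>k\<in>S. qscale c (f k))"
  using sum_comp_morphism[of "qscale c" f S] by (simp add: qscale_add o_def)



definition supp :: "nat \<Rightarrow> 'f::field qmat \<Rightarrow> bool" where
  "supp n x \<longleftrightarrow> (\<forall>i j. (n \<le> i \<or> n \<le> j) \<longrightarrow> x i j = 0)"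

lemma Hmat_supp: "x \<in> Hmat n A \<Longrightarrow> supp n x"
  unfolding Hmat_def supp_def by blast

lemma mmul_supp: "supp n (mmul l m n x y)"
  by (simp add: supp_def mmul_def)

lemma mmul_assoc: "mmul l m n (mmul l m n x y) z = mmul l m n x (mmul l m n y z)"
proof (rule ext, rule ext)
  fix i j
  show "mmul l m n (mmul l m n x y) z i j = mmul l m n x (mmul l m n y z) i j"
  proof (cases "i < n \<and> j < n")
    case True
    have "mmul l m n (mmul l m n x y) z i j = (\<Sum>k<n. \<Sum>p<n. qmul l m (qmul l m (x i p) (y p k)) (z k j))"
      using True by (simp add: mmul_def q_sum_left)
    also have "\<dots> = (\<Sum>p<n. \<Sum>k<n. qmul l m (x i p) (qmul l m (y p k) (z k j)))"
      by (subst sum.swap) (simp add: q_assoc)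
    also have "\<dots> = mmul l m n x (mmul l m n y z) i j"
      using True by (simp add: mmul_def q_sum_right)
    finally show ?thesis .
  qed (auto simp: mmul_def)
qed

lemma mmul_madd_left: "mmul l m n (madd x y) z = madd (mmul l m n x z) (mmul l m n y z)"
  by (intro ext) (auto simp: mmul_def madd_def q_add_left sum.distrib)
lemma mmul_madd_right: "mmul l m n z (madd x y) = madd (mmul l m n z x) (mmul l m n z y)"
  by (intro ext) (auto simp: mmul_def madd_def q_add_right sum.distrib)
lemma mmul_mscale_left: "mmul l m n (mscale c x) z = mscale c (mmul l m n x z)"
  by (intro ext) (auto simp: mmul_def mscale_def q_scale_left qscale_sum)
lemma mmul_mscale_right: "mmul l m n z (mscale c x) = mscale c (mmul l m n z x)"
  by (intro ext) (auto simp: mmul_def mscale_def q_scale_right qscale_sum)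

lemma qmul_if_right: "qmul l m a (if P then b else 0) = (if P then qmul l m a b else 0)" by simp
lemma qmul_if_left: "qmul l m (if P then b else 0) a = (if P then qmul l m b a else 0)" by simp

lemma mmul_mid_left: "supp n x \<Longrightarrow> mmul l m n (mid n) x = x"
proof (rule ext, rule ext)
  fix i j assume s: "supp n x"
  show "mmul l m n (mid n) x i j = x i j"
  proof (cases "i < n \<and> j < n")
    case True
    have "mmul l m n (mid n) x i j = (\<Sum>k<n. if k = i then x i j else 0)"
      using True by (auto simp: mmul_def mid_def qmul_if_right qmul_if_left intro!: sum.cong)
    also have "\<dots> = x i j" using True by simp
    finally show ?thesis .
  qed (use s in \<open>auto simp: mmul_def supp_def\<close>)
qed

lemma mmul_mid_right: "supp n x \<Longrightarrow> mmul l m n x (mid n) = x"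
proof (rule ext, rule ext)
  fix i j assume s: "supp n x"
  show "mmul l m n x (mid n) i j = x i j"
  proof (cases "i < n \<and> j < n")
    case True
    have "mmul l m n x (mid n) i j = (\<Sum>k<n. if k = j then x i j else 0)"
      using True by (auto simp: mmul_def mid_def qmul_if_right qmul_if_left intro!: sum.cong)
    also have "\<dots> = x i j" using True by simp
    finally show ?thesis .
  qed (use s in \<open>auto simp: mmul_def supp_def\<close>)
qed

lemma half_twice: "(2::'f::field) \<noteq> 0 \<Longrightarrow> qscale (1/2) (p + p) = (p::'f quat)"
  by (cases p rule: prod_cases4) (simp add: qscale_def field_simps)

lemma jprod_self: fixes x :: "'f::field qmat" and l m :: 'f
  shows "(2::'f) \<noteq> 0 \<Longrightarrow> jprod l m n x x = mmul l m n x x"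
  by (simp add: jprod_def mscale_def madd_def half_twice)

lemma sym_sq: fixes l m :: "'f::field" shows "(2::'f) \<noteq> 0 \<Longrightarrow> is_symmetry l m n A s \<Longrightarrow> mmul l m n s s = mid n"
  using jprod_self[of l m n s] by (simp add: is_symmetry_def)

lemma quat_U: "(2::'f::field) \<noteq> 0 \<Longrightarrow>
  qscale 2 (qscale (1/2) (qscale (1/2) (a + b) + qscale (1/2) (b + a))) - a = (b::'f quat)"
  apply (cases a rule: prod_cases4; cases b rule: prod_cases4)
  apply (simp add: qscale_def)
  apply (subgoal_tac "(8::'f) \<noteq> 0")
   apply (simp add: field_simps)
  using mult_eq_0_iff[of "2::'f" "4"] mult_eq_0_iff[of "2::'f" 2] apply simp
  done

lemma Umap_eq:
  assumes two: "(2::'f::field) \<noteq> 0" and ss: "mmul l m n s s = mid n" and x: "supp n (x::'f qmat)"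
  shows "Umap l m n s x = mmul l m n s (mmul l m n x s)"
proof -
  have a: "mmul l m n s (mmul l m n s x) = x"
    by (metis mmul_assoc ss mmul_mid_left x)
  have b: "mmul l m n (mmul l m n x s) s = x"
    by (metis mmul_assoc ss mmul_mid_right x)
  have c: "mmul l m n (mmul l m n s x) s = mmul l m n s (mmul l m n x s)"
    by (simp add: mmul_assoc)
  have "jprod l m n s (jprod l m n s x) = mscale (1/2) (madd (mscale (1/2) (madd x (mmul l m n s (mmul l m n x s))))
        (mscale (1/2) (madd (mmul l m n s (mmul l m n x s)) x)))"
    unfolding jprod_def by (simp only: mmul_madd_left mmul_madd_right mmul_mscale_left mmul_mscale_right a b c)
  then show ?thesis
    unfolding Umap_def
    apply (simp only:)
    apply (intro ext)
    apply (simp only: msub_def mscale_def madd_def)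
    apply (rule quat_U[OF two])
    done
qed



lemma HmatI:
  assumes "\<And>i j. n \<le> i \<or> n \<le> j \<Longrightarrow> x i j = 0"
    "\<And>i j. i < n \<Longrightarrow> j < n \<Longrightarrow> x i j \<in> A"
    "\<And>i j. x i j = qconj (x j i)"
  shows "x \<in> Hmat n A"
  unfolding Hmat_def using assms by blast
lemma HmatD1: "x \<in> Hmat n A \<Longrightarrow> n \<le> i \<or> n \<le> j \<Longrightarrow> x i j = 0"
  unfolding Hmat_def by blast
lemma HmatD2: "x \<in> Hmat n A \<Longrightarrow> i < n \<Longrightarrow> j < n \<Longrightarrow> x i j \<in> A"
  unfolding Hmat_def by blast
lemma HmatD3: "x \<in> Hmat n A \<Longrightarrow> x i j = qconj (x j i)"
  unfolding Hmat_def by blast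


definition goodA :: "'f::field quat set \<Rightarrow> bool" where
  "goodA A \<longleftrightarrow> A = algF \<or> A = algB \<or> A = algQ"

lemma mem_algF: "(p::'f::field quat) \<in> algF \<longleftrightarrow> fst (snd p) = 0 \<and> fst (snd (snd p)) = 0 \<and> snd (snd (snd p)) = 0"
  by (cases p rule: prod_cases4) (auto simp: algF_def)
lemma mem_algB: "(p::'f::field quat) \<in> algB \<longleftrightarrow> fst (snd (snd p)) = 0 \<and> snd (snd (snd p)) = 0"
  by (cases p rule: prod_cases4) (auto simp: algB_def)
lemma mem_algQ[simp]: "p \<in> algQ" by (simp add: algQ_def)

lemma q_diff_left: "qmul l m (x - y) z = qmul l m x z - qmul l m y z"
  by (cases x rule: prod_cases4; cases y rule: prod_cases4; cases z rule: prod_cases4)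
     (simp add: qmul_def algebra_simps)

lemma A_add: "goodA A \<Longrightarrow> p \<in> A \<Longrightarrow> q \<in> A \<Longrightarrow> p + q \<in> A"
  by (auto simp: goodA_def mem_algF mem_algB)
lemma A_diff: "goodA A \<Longrightarrow> p \<in> A \<Longrightarrow> q \<in> A \<Longrightarrow> p - q \<in> A"
  by (auto simp: goodA_def mem_algF mem_algB)
lemma A_zero: "goodA A \<Longrightarrow> 0 \<in> A"
  by (auto simp: goodA_def mem_algF mem_algB)
lemma A_one: "goodA A \<Longrightarrow> qone \<in> A"
  by (auto simp: goodA_def mem_algF mem_algB qone_def)
lemma A_scale: "goodA A \<Longrightarrow> p \<in> A \<Longrightarrow> qscale c p \<in> A"
  by (cases p rule: prod_cases4) (auto simp: goodA_def mem_algF mem_algB qscale_def)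
lemma A_conj: "goodA A \<Longrightarrow> p \<in> A \<Longrightarrow> qconj p \<in> A"
  by (cases p rule: prod_cases4) (auto simp: goodA_def mem_algF mem_algB qconj_def)
lemma A_mul: "goodA A \<Longrightarrow> p \<in> A \<Longrightarrow> q \<in> A \<Longrightarrow> qmul l m p q \<in> A"
  by (cases p rule: prod_cases4; cases q rule: prod_cases4) (auto simp: goodA_def mem_algF mem_algB qmul_def)
lemma A_sum: "goodA A \<Longrightarrow> (\<And>k. k \<in> S \<Longrightarrow> f k \<in> A) \<Longrightarrow> sum f S \<in> A"
proof (induction S rule: infinite_finite_induct)
  case (infinite S) then show ?case by (simp add: A_zero)
next
  case empty then show ?case by (simp add: A_zero)
next
  case (insert x F) then show ?case by (simp add: A_add)
qed

lemma A_nondeg: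
  assumes "goodA A" "l \<noteq> 0" "m \<noteq> 0" "p \<in> A" "\<forall>a\<in>A. fst (qmul l m p a) = 0"
  shows "p = 0"
proof -
  obtain p0 p1 p2 p3 where p: "p = (p0,p1,p2,p3)" by (cases p rule: prod_cases4)
  have "p0 = 0" using assms(5) A_one[OF assms(1)] by (auto simp: p qmul_def qone_def)
  moreover have "p1 = 0"
  proof (cases "A = algF")
    case True then show ?thesis using assms(4) by (simp add: p mem_algF)
  next
    case False
    then have "(0,1,0,0) \<in> A" using assms(1) by (auto simp: goodA_def mem_algB)
    then show ?thesis using assms(5,2) by (auto simp: p qmul_def)
  qed
  moreover have "p2 = 0 \<and> p3 = 0"
  proof (cases "A = algQ")
    case False then show ?thesis using assms(1,4) by (auto simp: p mem_algF mem_algB goodA_def)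
  next
    case True
    have "fst (qmul l m p (0,0,1,0)) = 0" "fst (qmul l m p (0,0,0,1)) = 0"
      using assms(5) True by auto
    then show ?thesis using assms(2,3) by (simp add: p qmul_def)
  qed
  ultimately show ?thesis by (simp add: p zero_quat)
qed

lemma mmul_conj:
  assumes "\<forall>i j. x i j = qconj (x j i)" "\<forall>i j. y i j = qconj (y j i)"
  shows "qconj (mmul l m n x y j i) = mmul l m n y x i j"
proof -
  have "qconj (qmul l m (x j k) (y k i)) = qmul l m (y i k) (x k j)" for k
    by (metis assms qconj_qmul)
  then show ?thesis by (auto simp: mmul_def qconj_sum)
qed

lemma H_madd: "goodA A \<Longrightarrow> x \<in> Hmat n A \<Longrightarrow> y \<in> Hmat n A \<Longrightarrow> madd x y \<in> Hmat n A"
  apply (rule HmatI)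
  apply (simp add: madd_def HmatD1)
  apply (simp add: madd_def HmatD2 A_add)
  apply (simp only: madd_def qconj_add)
  apply (metis HmatD3)
  done
lemma H_msub: "goodA A \<Longrightarrow> x \<in> Hmat n A \<Longrightarrow> y \<in> Hmat n A \<Longrightarrow> msub x y \<in> Hmat n A"
  apply (rule HmatI)
  apply (simp add: msub_def HmatD1)
  apply (simp add: msub_def HmatD2 A_diff)
  apply (simp only: msub_def qconj_diff)
  apply (metis HmatD3)
  done
lemma H_mscale: "goodA A \<Longrightarrow> x \<in> Hmat n A \<Longrightarrow> mscale c x \<in> Hmat n A"
  apply (rule HmatI)
  apply (simp add: mscale_def HmatD1)
  apply (simp add: mscale_def HmatD2 A_scale)
  apply (simp only: mscale_def qconj_scale)
  apply (metis HmatD3)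
  done

lemma H_jprod:
  assumes g: "goodA A" and x: "x \<in> Hmat n A" and y: "y \<in> Hmat n A"
  shows "jprod l m n x y \<in> Hmat n A"
proof -
  have hx: "\<forall>i j. x i j = qconj (x j i)" and hy: "\<forall>i j. y i j = qconj (y j i)"
    using x y HmatD3 by metis+
  have inA: "mmul l m n u v i j \<in> A" if "u \<in> Hmat n A" "v \<in> Hmat n A" "i < n" "j < n" for u v i j
  proof -
    have "\<forall>k<n. qmul l m (u i k) (v k j) \<in> A" using that by (auto intro: A_mul[OF g] HmatD2)
    then show ?thesis using that by (auto simp: mmul_def intro!: A_sum[OF g])
  qed
  show ?thesis
    unfolding jprod_def mscale_def madd_def
  proof (rule HmatI)
    fix i j show "n \<le> i \<or> n \<le> j \<Longrightarrow> qscale (1 / 2) (mmul l m n x y i j + mmul l m n y x i j) = 0"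
      by (auto simp: mmul_def)
  next
    fix i j assume "i < n" "j < n"
    then show "qscale (1 / 2) (mmul l m n x y i j + mmul l m n y x i j) \<in> A"
      using inA x y by (intro A_scale A_add g) auto
  next
    fix i j
    show "qscale (1 / 2) (mmul l m n x y i j + mmul l m n y x i j) =
          qconj (qscale (1 / 2) (mmul l m n x y j i + mmul l m n y x j i))"
      using mmul_conj[OF hx hy, of l m n j i] mmul_conj[OF hy hx, of l m n j i]
      by (simp add: qconj_scale qconj_add add.commute)
  qed
qed

definition tr :: "nat \<Rightarrow> 'f::field qmat \<Rightarrow> 'f" where
  "tr n M = fst (\<Sum>i<n. M i i)"

definition tau :: "'f::field \<Rightarrow> 'f \<Rightarrow> nat \<Rightarrow> 'f qmat \<Rightarrow> 'f qmat \<Rightarrow> 'f" where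
  "tau l m n x y = tr n (mmul l m n x y)"

lemma tau_expand: "tau l m n x y = (\<Sum>i<n. \<Sum>k<n. fst (qmul l m (x i k) (y k i)))"
  by (simp add: tau_def tr_def mmul_def fst_sum)

lemma tau_comm: "tau l m n x y = tau l m n y x"
  unfolding tau_expand by (subst sum.swap) (simp add: fst_qmul_comm)

lemma tau_madd_left: "tau l m n (madd a b) c = tau l m n a c + tau l m n b c"
  unfolding tau_expand by (simp add: madd_def q_add_left sum.distrib)
lemma tau_msub_left: "tau l m n (msub a b) c = tau l m n a c - tau l m n b c"
  unfolding tau_expand by (simp add: msub_def q_diff_left sum_subtractf)
lemma tau_mscale_left: "tau l m n (mscale r a) c = r * tau l m n a c"
  unfolding tau_expand by (simp add: mscale_def q_scale_left fst_qscale sum_distrib_left)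

lemma conj_sym_prod:
  assumes ss: "mmul l m n s s = mid n" and x: "supp n x" and y: "supp n y"
  shows "mmul l m n (mmul l m n s (mmul l m n x s)) (mmul l m n s (mmul l m n y s))
       = mmul l m n s (mmul l m n (mmul l m n x y) s)"
proof -
  have "mmul l m n s (mmul l m n s (mmul l m n y s)) = mmul l m n y s"
    by (metis mmul_assoc ss mmul_mid_left mmul_supp)
  then show ?thesis by (simp add: mmul_assoc)
qed

lemma conj_sym_twice:
  assumes ss: "mmul l m n s s = mid n" and x: "supp n x"
  shows "mmul l m n s (mmul l m n (mmul l m n s (mmul l m n x s)) s) = x"
proof -
  have "mmul l m n s (mmul l m n (mmul l m n s (mmul l m n x s)) s)
      = mmul l m n (mmul l m n s s) (mmul l m n x (mmul l m n s s))"
    by (simp add: mmul_assoc)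
  also have "\<dots> = x" using ss x by (simp add: mmul_mid_left mmul_mid_right)
  finally show ?thesis .
qed

lemma tau_conj_sym:
  assumes ss: "mmul l m n s s = mid n" and x: "supp n x" and y: "supp n y"
  shows "tau l m n (mmul l m n s (mmul l m n x s)) (mmul l m n s (mmul l m n y s)) = tau l m n x y"
proof -
  let ?W = "mmul l m n (mmul l m n x y) s"
  have "tau l m n (mmul l m n s (mmul l m n x s)) (mmul l m n s (mmul l m n y s)) = tau l m n s ?W"
    unfolding tau_def using conj_sym_prod[OF ss x y] by simp
  also have "\<dots> = tau l m n ?W s" by (rule tau_comm)
  also have "mmul l m n ?W s = mmul l m n x y"
    by (metis mmul_assoc ss mmul_mid_right mmul_supp)
  then have "tau l m n ?W s = tau l m n x y" by (simp add: tau_def)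
  finally show ?thesis .
qed



definition sgl :: "nat \<Rightarrow> nat \<Rightarrow> 'f::field quat \<Rightarrow> 'f qmat" where
  "sgl k0 p0 a = (\<lambda>k p. if k = k0 \<and> p = p0 then a else 0)"

lemma tau_sgl:
  assumes "k0 < n" "p0 < n"
  shows "tau l m n z (sgl k0 p0 a) = fst (qmul l m (z p0 k0) a)"
proof -
  have e: "fst (qmul l m (z i k) (sgl k0 p0 a k i)) =
     (if k = k0 then (if i = p0 then fst (qmul l m (z p0 k0) a) else 0) else 0)" for i k
    by (auto simp: sgl_def)
  have e2: "(\<Sum>k<n. fst (qmul l m (z i k) (sgl k0 p0 a k i))) = (if i = p0 then fst (qmul l m (z p0 k0) a) else 0)" for i
    unfolding e using assms by simp
  show ?thesis unfolding tau_expand e2 using assms by simp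
qed

lemma tau_madd_right: "tau l m n c (madd a b) = tau l m n c a + tau l m n c b"
  by (metis tau_comm tau_madd_left)

lemma nondeg:
  fixes l m :: "'f::field" and z :: "'f qmat"
  assumes g: "goodA A" and two: "(2::'f) \<noteq> 0" and l: "l \<noteq> 0" and m: "m \<noteq> 0"
    and z: "z \<in> Hmat n A" and orth: "\<forall>w\<in>Hmat n A. tau l m n z w = 0"
  shows "z = (\<lambda>i j. 0)"
proof (intro ext)
  fix i j
  have zh: "\<forall>i j. z i j = qconj (z j i)" using z HmatD3 by metis
  show "z i j = 0"
  proof (cases "i < n \<and> j < n")
    case False then show ?thesis using z HmatD1 by (metis not_le)
  next
    case True
    then have ij: "i < n" "j < n" by auto
    have zA: "z i j \<in> A" using z ij by (rule HmatD2)
    show ?thesis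
    proof (cases "i = j")
      case True
      have w: "sgl i i qone \<in> Hmat n A"
        using ij A_one[OF g] A_zero[OF g] by (intro HmatI) (auto simp: sgl_def)
      have f0: "fst (z i i) = 0" using orth w tau_sgl[OF ij(1) ij(1), of l m z qone] by simp
      have "z i i = qconj (z i i)" using zh by blast
      with f0 two show ?thesis unfolding True
        by (cases "z j j" rule: prod_cases4) (auto simp: qconj_def zero_quat)
    next
      case False
      have "fst (qmul l m (z i j) a) = 0" if a: "a \<in> A" for a
      proof -
        let ?w = "madd (sgl j i a) (sgl i j (qconj a))"
        have w: "?w \<in> Hmat n A"
          using ij False a A_conj[OF g a] A_zero[OF g]
          by (intro HmatI) (auto simp: sgl_def madd_def)
        have "tau l m n z ?w = fst (qmul l m (z i j) a) + fst (qmul l m (z j i) (qconj a))"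
          by (simp add: tau_madd_right tau_sgl ij)
        also have "fst (qmul l m (z j i) (qconj a)) = fst (qmul l m (z i j) a)"
          using zh fst_qmul_conj by metis
        finally have "2 * fst (qmul l m (z i j) a) = 0" using orth w by simp
        with two show ?thesis by simp
      qed
      then show ?thesis using A_nondeg[OF g l m zA] by blast
    qed
  qed
qed



lemma quat_cancel: "(2::'f::field) \<noteq> 0 \<Longrightarrow> a + qscale 2 p + b = a + qscale 2 q + b \<Longrightarrow> p = (q::'f quat)"
  by (cases p rule: prod_cases4; cases q rule: prod_cases4) (simp add: qscale_def)

lemma quat_two_half: "(2::'f::field) \<noteq> 0 \<Longrightarrow> qscale 2 (qscale (1/2) (p + q)) = (p + q::'f quat)"
  by (simp add: qscale_scale)

lemma sq_expand:
  fixes x y :: "'f::field qmat"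
  assumes two: "(2::'f) \<noteq> 0"
  shows "mmul l m n (madd x y) (madd x y) =
    madd (madd (mmul l m n x x) (mscale 2 (jprod l m n x y))) (mmul l m n y y)"
  unfolding jprod_def mmul_madd_left mmul_madd_right
  by (intro ext) (simp add: madd_def mscale_def quat_two_half[OF two] algebra_simps)

theorem main:
  fixes lam mu :: "'f::field" and n :: nat and A :: "'f quat set"
    and D :: "'f qmat \<Rightarrow> 'f qmat"
  assumes two: "(2::'f) \<noteq> 0"
    and params: "lam \<noteq> 0" "mu \<noteq> 0"
    and g: "goodA A"
    and D: "two_local_1_aut lam mu n A D"
  shows "jordan_automorphism lam mu n A D"
proof -
  let ?H = "Hmat n A"
  let ?P = "\<lambda>s x. mmul lam mu n s (mmul lam mu n x s)"
  have Dmem: "D x \<in> ?H" if "x \<in> ?H" for x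
    using D that unfolding two_local_1_aut_def by blast
  have loc: "\<exists>s. mmul lam mu n s s = mid n \<and> D x = ?P s x \<and> D y = ?P s y"
    if xH: "x \<in> ?H" and yH: "y \<in> ?H" for x y
  proof -
    have all: "\<forall>x\<in>?H. \<forall>y\<in>?H. \<exists>s. is_symmetry lam mu n A s \<and>
         D x = Umap lam mu n s x \<and> D y = Umap lam mu n s y"
      using D unfolding two_local_1_aut_def by (rule conjunct2)
    obtain s where s: "is_symmetry lam mu n A s" "D x = Umap lam mu n s x" "D y = Umap lam mu n s y"
      using bspec[OF bspec[OF all xH] yH] by (elim exE conjE)
    have ss: "mmul lam mu n s s = mid n" using sym_sq[OF two s(1)] .
    have "D x = ?P s x" using s(2) Umap_eq[OF two ss Hmat_supp[OF xH]] by simp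
    moreover have "D y = ?P s y" using s(3) Umap_eq[OF two ss Hmat_supp[OF yH]] by simp
    ultimately show ?thesis using ss by blast
  qed
  have DD: "D (D x) = x" if x: "x \<in> ?H" for x
  proof -
    obtain s where s: "mmul lam mu n s s = mid n" "D x = ?P s x" "D (D x) = ?P s (D x)"
      using loc[OF x Dmem[OF x]] by blast
    then show ?thesis using conj_sym_twice[OF s(1) Hmat_supp[OF x]] by simp
  qed
  have Dtau: "tau lam mu n (D x) (D y) = tau lam mu n x y" if xH: "x \<in> ?H" and yH: "y \<in> ?H" for x y
  proof -
    obtain s where s: "mmul lam mu n s s = mid n" "D x = ?P s x" "D y = ?P s y"
      using loc[OF xH yH] by blast
    show ?thesis unfolding s(2,3) by (rule tau_conj_sym[OF s(1) Hmat_supp[OF xH] Hmat_supp[OF yH]])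
  qed
  have Dsq: "D (mmul lam mu n x x) = mmul lam mu n (D x) (D x)" if x: "x \<in> ?H" for x
  proof -
    have xx: "mmul lam mu n x x \<in> ?H" using H_jprod[OF g x x, of lam mu] jprod_self[OF two] by metis
    obtain s where s: "mmul lam mu n s s = mid n" "D x = ?P s x"
        "D (mmul lam mu n x x) = ?P s (mmul lam mu n x x)"
      using loc[OF x xx] by blast
    then show ?thesis using conj_sym_prod[OF s(1) Hmat_supp[OF x] Hmat_supp[OF x]] by simp
  qed
  have zero: "z = (\<lambda>i j. 0)" if z: "z \<in> ?H" and o: "\<And>w. w \<in> ?H \<Longrightarrow> tau lam mu n z (D w) = 0" for z
  proof (rule nondeg[OF g two params z], intro ballI)
    fix w assume w: "w \<in> ?H"
    show "tau lam mu n z w = 0" using o[OF Dmem[OF w]] DD[OF w] by simp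
  qed
  have eqz: "a = b" if "msub a b = (\<lambda>i j. 0)" for a b :: "'f qmat"
  proof (intro ext)
    fix i j show "a i j = b i j" using fun_cong[OF fun_cong[OF that, of i], of j] by (simp add: msub_def)
  qed
  have add: "D (madd x y) = madd (D x) (D y)" if x: "x \<in> ?H" and y: "y \<in> ?H" for x y
  proof (rule eqz, rule zero)
    show "msub (D (madd x y)) (madd (D x) (D y)) \<in> ?H"
      by (intro H_msub H_madd g Dmem x y)
    fix w assume w: "w \<in> ?H"
    show "tau lam mu n (msub (D (madd x y)) (madd (D x) (D y))) (D w) = 0"
      by (simp add: tau_msub_left tau_madd_left Dtau H_madd[OF g x y] x y w tau_madd_left)
  qed
  have scl: "D (mscale c x) = mscale c (D x)" if x: "x \<in> ?H" for c x
  proof (rule eqz, rule zero)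
    show "msub (D (mscale c x)) (mscale c (D x)) \<in> ?H"
      by (intro H_msub H_mscale g Dmem x)
    fix w assume w: "w \<in> ?H"
    show "tau lam mu n (msub (D (mscale c x)) (mscale c (D x))) (D w) = 0"
      by (simp add: tau_msub_left tau_mscale_left Dtau H_mscale[OF g x] x w)
  qed
  have jor: "D (jprod lam mu n x y) = jprod lam mu n (D x) (D y)" if x: "x \<in> ?H" and y: "y \<in> ?H" for x y
  proof -
    have sqH: "mmul lam mu n u u \<in> ?H" if "u \<in> ?H" for u
      using H_jprod[OF g that that, of lam mu] jprod_self[OF two] by metis
    have jH: "jprod lam mu n x y \<in> ?H" by (rule H_jprod[OF g x y])
    have "D (mmul lam mu n (madd x y) (madd x y)) =
       madd (madd (mmul lam mu n (D x) (D x)) (mscale 2 (D (jprod lam mu n x y)))) (mmul lam mu n (D y) (D y))"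
      unfolding sq_expand[OF two]
      by (simp add: add scl Dsq sqH x y jH H_madd[OF g] H_mscale[OF g])
    moreover have "D (mmul lam mu n (madd x y) (madd x y)) =
       madd (madd (mmul lam mu n (D x) (D x)) (mscale 2 (jprod lam mu n (D x) (D y)))) (mmul lam mu n (D y) (D y))"
    proof -
      have "D (mmul lam mu n (madd x y) (madd x y)) = mmul lam mu n (D (madd x y)) (D (madd x y))"
        by (rule Dsq[OF H_madd[OF g x y]])
      also have "\<dots> = mmul lam mu n (madd (D x) (D y)) (madd (D x) (D y))" by (simp only: add[OF x y])
      also have "\<dots> = madd (madd (mmul lam mu n (D x) (D x)) (mscale 2 (jprod lam mu n (D x) (D y)))) (mmul lam mu n (D y) (D y))"
        by (rule sq_expand[OF two])
      finally show ?thesis .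
    qed
    ultimately have e: "madd (madd (mmul lam mu n (D x) (D x)) (mscale 2 (D (jprod lam mu n x y)))) (mmul lam mu n (D y) (D y))
      = madd (madd (mmul lam mu n (D x) (D x)) (mscale 2 (jprod lam mu n (D x) (D y)))) (mmul lam mu n (D y) (D y))"
      by simp
    show ?thesis
    proof (intro ext)
      fix i j
      show "D (jprod lam mu n x y) i j = jprod lam mu n (D x) (D y) i j"
        using fun_cong[OF fun_cong[OF e, of i], of j] quat_cancel[OF two]
        by (simp add: madd_def mscale_def)
    qed
  qed
  have bij: "bij_betw D ?H ?H"
    by (rule bij_betw_byWitness[where f'=D]) (auto simp: DD Dmem)
  show ?thesis unfolding jordan_automorphism_def
    using bij add scl jor by blast
qed


theorem theorem4p7:
  fixes lam mu :: "'f::field" and n :: nat and A :: "'f quat set"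
    and D :: "'f qmat \<Rightarrow> 'f qmat"
  assumes char: "(2::'f) \<noteq> 0"
    and n: "3 \<le> n"
    and params: "lam \<noteq> 0" "mu \<noteq> 0"
    and A: "A = algF \<or> A = algB \<or> A = algQ"
    and div: "is_division lam mu A"
    and D: "two_local_1_aut lam mu n A D"
  shows "jordan_automorphism lam mu n A D"
proof -
  have g: "goodA A" using A by (simp add: goodA_def)
  show ?thesis by (rule main[OF char params g D])
qed

end
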